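(* Let $L>0$, $N\ge 1$, grid points $x_i$, $i=0,\dots,N$, evenly spaced on $[0,L]$, and let $\mathbf D,\mathbf H$ be $(N+1)\times(N+1)$ real matrices with $\mathbf H$ diagonal and positive definite, $\mathbf H\mathbf D=\mathbf Q$, and $\mathbf u^T(\mathbf Q+\mathbf Q^T)\mathbf v=u_Nv_N-u_0v_0$ for all $\mathbf u,\mathbf v\in\mathbb{R}^{N+1}$. Let $\bar{\mathbf c}=(\bar c_0,\dots,\bar c_N)^T$ with all $\bar c_i>0$, and $\mathbf a,\mathbf b,\mathbf c,\mathbf d\in\mathbb{R}^{N+1}$. Define $\mathbf\Lambda=\mathrm{diag}(-\bar{\mathbf c},\bar{\mathbf c})$, $\mathbf D_2=\mathbf I_2\otimes\mathbf D$, $\mathbf H_2=\mathbf I_2\otimes\mathbf H$, $$\mathbf M_{\bar c}=\begin{pmatrix}-\mathrm{diag}(\mathbf D\bar{\mathbf c})&0\\0&\mathrm{diag}(\mathbf D\bar{\mathbf c})\end{pmatrix},\quad \tilde{\mathbf B}=\begin{pmatrix}\mathrm{diag}(\mathbf a)&\mathrm{diag}(\mathbf b)\\\mathrm{diag}(\mathbf c)&\mathrm{diag}(\mathbf d)\end{pmatrix},$$ and $\mathbf\Lambda_D=\tfrac12(\mathbf\Lambda\mathbf D_2+\mathbf D_2\mathbf\Lambda)-\tfrac12\mathbf M_{\bar c}$. Let $R_0,R_L\in[-1,1]$ and set $\alpha_0=-\bar c_0$, $\alpha_L=-\bar c_N$. Let $\mathbf W(t)=(\mathbf w_1(t)^T,\mathbf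 w_2(t)^T)^T\in\mathbb{R}^{2(N+1)}$, with components $w_{k,i}$, be a solution of $$\mathbf W_t+\mathbf\Lambda_D\mathbf W=\tilde{\mathbf B}\mathbf W+\alpha_0\mathbf H_2^{-1}(w_{2,0}-R_0w_{1,0})(E_2\otimes e_0)+\alpha_L\mathbf H_2^{-1}(w_{1,N}-R_Lw_{2,N})(E_1\otimes e_N),$$ where $E_j\in\mathbb{R}^2$ and $e_j\in\mathbb{R}^{N+1}$ are standard basis vectors. Let $\mathbf E_h=\mathbf W^T\mathbf H_2\mathbf W$ and let $\|\cdot\|_{\mathbf H}$ denote the operator norm induced by the inner product $(\mathbf U,\mathbf V)_{\mathbf H}=\mathbf U^T\mathbf H_2\mathbf V$. Then $$\frac{d\mathbf E_h}{dt}\le 2\big(\|\tilde{\mathbf B}\|_{\mathbf H}+\|\mathbf M_{\bar c}\|_{\mathbf H}\big)\mathbf E_h .$$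
   Context: This is the summation-by-parts / simultaneous-approximation-term (SBP-SAT) semi-discretization of $W_t+\Lambda(x)W_x=\tilde B(x)W$, $\Lambda=\mathrm{diag}(-\bar c,\bar c)$, with boundary conditions $w_2(0,t)=R_0w_1(0,t)$, $w_1(L,t)=R_Lw_2(L,t)$ and zero boundary and source data; $\bar{\mathbf c},\mathbf a,\dots$ are the grid values of the coefficient functions. *)

theory Defs
  imports "HOL-Analysis.Analysis"
begin

text \<open>Vectors of length n are functions nat => real (only indices < n matter);
  n x n matrices are functions nat => nat => real (only indices < n matter).\<close>

definition mvec :: "nat \<Rightarrow> (nat \<Rightarrow> nat \<Rightarrow> real) \<Rightarrow> (nat \<Rightarrow> real) \<Rightarrow> nat \<Rightarrow> real" where
  "mvec n A u = (\<lambda>i. \<Sum>j<n. A i j * u j)"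

definition mmul :: "nat \<Rightarrow> (nat \<Rightarrow> nat \<Rightarrow> real) \<Rightarrow> (nat \<Rightarrow> nat \<Rightarrow> real) \<Rightarrow> nat \<Rightarrow> nat \<Rightarrow> real" where
  "mmul n A B = (\<lambda>i j. \<Sum>k<n. A i k * B k j)"

definition diagm :: "(nat \<Rightarrow> real) \<Rightarrow> nat \<Rightarrow> nat \<Rightarrow> real" where
  "diagm v = (\<lambda>i j. if i = j then v i else 0)"

text \<open>2x2 block matrix with n x n blocks; the stacked vector (w1, w2) has w1 at indices
  0..n-1 and w2 at indices n..2n-1.\<close>
definition blk :: "nat \<Rightarrow> (nat \<Rightarrow> nat \<Rightarrow> real) \<Rightarrow> (nat \<Rightarrow> nat \<Rightarrow> real) \<Rightarrow>
    (nat \<Rightarrow> nat \<Rightarrow> real) \<Rightarrow> (nat \<Rightarrow> nat \<Rightarrow> real) \<Rightarrow> nat \<Rightarrow> nat \<Rightarrow> real" where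
  "blk n A B C D = (\<lambda>i j. if i < n then (if j < n then A i j else B i (j - n))
                            else (if j < n then C (i - n) j else D (i - n) (j - n)))"

definition kron_I2 :: "nat \<Rightarrow> (nat \<Rightarrow> nat \<Rightarrow> real) \<Rightarrow> nat \<Rightarrow> nat \<Rightarrow> real" where
  "kron_I2 n A = blk n A (\<lambda>_ _. 0) (\<lambda>_ _. 0) A"

definition bform :: "nat \<Rightarrow> (nat \<Rightarrow> nat \<Rightarrow> real) \<Rightarrow> (nat \<Rightarrow> real) \<Rightarrow> (nat \<Rightarrow> real) \<Rightarrow> real" where
  "bform n G u v = (\<Sum>i<n. \<Sum>j<n. u i * G i j * v j)"

definition opnorm_G :: "nat \<Rightarrow> (nat \<Rightarrow> nat \<Rightarrow> real) \<Rightarrow> (nat \<Rightarrow> nat \<Rightarrow> real) \<Rightarrow> real" where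
  "opnorm_G n G A = Sup {sqrt (bform n G (mvec n A u) (mvec n A u)) / sqrt (bform n G u u)
                          | u. \<exists>i<n. u i \<noteq> 0}"

end

theory Submission
  imports Defs
begin


lemma sum_split_add: "(\<Sum>i<n+m. (f::nat\<Rightarrow>'a::comm_monoid_add) i) = (\<Sum>i<n. f i) + (\<Sum>i<m. f (n+i))"
  by (induction m) (simp_all add: ac_simps)

lemma sum_split2: "sum (f::nat\<Rightarrow>'a::comm_monoid_add) {..<2*n} = (\<Sum>i<n. f i) + (\<Sum>i<n. f (n+i))"
  using sum_split_add[where n=n and m=n and f=f] by (simp add: mult_2)

lemma mvec_blk: "i < 2*n \<Longrightarrow> mvec (2*n) (blk n A B C E) V i =
   (if i < n then mvec n A V i + mvec n B (\<lambda>k. V (n+k)) i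
    else mvec n C V (i-n) + mvec n E (\<lambda>k. V (n+k)) (i-n))"
  unfolding mvec_def blk_def sum_split2 by simp

lemma mvec_diagm: "i < n \<Longrightarrow> mvec n (diagm v) V i = v i * V i"
proof -
  assume "i < n"
  have "\<And>j. diagm v i j * V j = (if i = j then v i * V i else 0)" unfolding diagm_def by auto
  then show ?thesis unfolding mvec_def using \<open>i < n\<close> by simp
qed

lemma mvec_zero: "mvec n (\<lambda>_ _. 0) V i = 0"
  unfolding mvec_def by simp

lemma mvec_mmul: "mvec n (mmul n A B) V i = mvec n A (mvec n B V) i"
  unfolding mvec_def mmul_def
  by (simp add: sum_distrib_left sum_distrib_right mult.assoc) (rule sum.swap)

lemma mvec_cong: "(\<And>j. j < n \<Longrightarrow> V j = V' j) \<Longrightarrow> mvec n A V i = mvec n A V' i"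
  unfolding mvec_def by (rule sum.cong) auto

lemma mvec_lin: "mvec m (\<lambda>p q. (A p q + B p q) / 2 - C p q / 2) V i
   = (mvec m A V i + mvec m B V i) / 2 - mvec m C V i / 2"
proof -
  have "mvec m (\<lambda>p q. (A p q + B p q) / 2 - C p q / 2) V i
     = (\<Sum>j<m. (A i j * V j + B i j * V j) / 2 - C i j * V j / 2)"
    unfolding mvec_def by (intro sum.cong) (auto simp: algebra_simps)
  also have "\<dots> = (mvec m A V i + mvec m B V i) / 2 - mvec m C V i / 2"
    unfolding mvec_def sum_subtractf sum_divide_distrib[symmetric] sum.distrib ..
  finally show ?thesis .
qed

lemma bform_diag:
  assumes "\<And>i j. i < m \<Longrightarrow> j < m \<Longrightarrow> i \<noteq> j \<Longrightarrow> G i j = 0"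
  shows "bform m G U V = (\<Sum>i<m. G i i * U i * V i)"
  unfolding bform_def
proof (rule sum.cong)
  fix i assume "i \<in> {..<m}"
  then have "(\<Sum>j<m. U i * G i j * V j) = (\<Sum>j<m. if j = i then U i * G i i * V i else 0)"
    using assms by (intro sum.cong) auto
  also have "\<dots> = U i * G i i * V i" using \<open>i \<in> {..<m}\<close> by simp
  finally show "(\<Sum>j<m. U i * G i j * V j) = G i i * U i * V i" by simp
qed simp

definition ipH :: "nat \<Rightarrow> (nat \<Rightarrow> nat \<Rightarrow> real) \<Rightarrow> (nat \<Rightarrow> real) \<Rightarrow> (nat \<Rightarrow> real) \<Rightarrow> real" where
  "ipH n H U V = (\<Sum>k<n. H k k * (U k * V k + U (n+k) * V (n+k)))"

lemma kron_diag:
  assumes "\<And>i j. i < n \<Longrightarrow> j < n \<Longrightarrow> i \<noteq> j \<Longrightarrow> H i j = 0"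
  shows "\<And>i j. i < 2*n \<Longrightarrow> j < 2*n \<Longrightarrow> i \<noteq> j \<Longrightarrow> kron_I2 n H i j = 0"
  using assms unfolding kron_I2_def blk_def by auto

lemma bform_H2:
  assumes "\<And>i j. i < n \<Longrightarrow> j < n \<Longrightarrow> i \<noteq> j \<Longrightarrow> H i j = 0"
  shows "bform (2*n) (kron_I2 n H) U V = ipH n H U V"
proof -
  have "bform (2*n) (kron_I2 n H) U V = (\<Sum>i<2*n. kron_I2 n H i i * U i * V i)"
    by (rule bform_diag) (rule kron_diag[OF assms])
  also have "\<dots> = ipH n H U V"
    unfolding sum_split2 ipH_def
    by (simp add: kron_I2_def blk_def sum.distrib[symmetric] algebra_simps)
  finally show ?thesis .
qed

lemma ipH_cong: "(\<And>i. i < 2*n \<Longrightarrow> V i = V' i) \<Longrightarrow> ipH n H U V = ipH n H U V'"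
  unfolding ipH_def by (intro sum.cong) auto

lemma ipH_add: "ipH n H U (\<lambda>i. V i + V' i) = ipH n H U V + ipH n H U V'"
  unfolding ipH_def by (simp add: sum.distrib[symmetric] algebra_simps)

lemma ipH_diff: "ipH n H U (\<lambda>i. V i - V' i) = ipH n H U V - ipH n H U V'"
  unfolding ipH_def by (simp add: sum_subtractf[symmetric] algebra_simps)

lemma ipH_neg: "ipH n H U (\<lambda>i. - V i) = - ipH n H U V"
  unfolding ipH_def by (simp add: sum_negf[symmetric] algebra_simps)

lemma ipH_scale: "ipH n H U (\<lambda>i. r * V i) = r * ipH n H U V"
  unfolding ipH_def by (simp add: sum_distrib_left algebra_simps)

lemma ipH_div: "ipH n H U (\<lambda>i. V i / r) = ipH n H U V / r"
  unfolding ipH_def sum_divide_distrib by (intro sum.cong) (auto simp: algebra_simps add_divide_distrib)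

lemma bnd: "0 \<le> x * x + y * y - 2 * r * x * y" if "\<bar>r\<bar> \<le> 1" for x y r :: real
proof -
  have a: "r * (x * y) \<le> \<bar>r\<bar> * \<bar>x * y\<bar>" by (metis abs_ge_self abs_mult)
  have b: "\<bar>r\<bar> * \<bar>x * y\<bar> \<le> \<bar>x * y\<bar>" using that mult_right_mono[OF that abs_ge_zero[of "x*y"]] by simp
  have "0 \<le> (\<bar>x\<bar> - \<bar>y\<bar>) * (\<bar>x\<bar> - \<bar>y\<bar>)" by simp
  also have "\<dots> = \<bar>x\<bar> * \<bar>x\<bar> + \<bar>y\<bar> * \<bar>y\<bar> - 2 * (\<bar>x\<bar> * \<bar>y\<bar>)" by (simp add: algebra_simps)
  also have "\<dots> = x * x + y * y - 2 * \<bar>x * y\<bar>" by (simp add: abs_mult)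
  finally have c: "2 * \<bar>x * y\<bar> \<le> x * x + y * y" by simp
  show ?thesis using a b c by (simp add: mult.assoc)
qed




locale dg =
  fixes m :: nat and G :: "nat \<Rightarrow> nat \<Rightarrow> real"
  assumes diag: "\<And>i j. i < m \<Longrightarrow> j < m \<Longrightarrow> i \<noteq> j \<Longrightarrow> G i j = 0"
    and pos: "\<And>i. i < m \<Longrightarrow> G i i > 0"
begin

lemma bf: "bform m G U V = (\<Sum>i<m. G i i * U i * V i)"
  unfolding bform_def
proof (rule sum.cong)
  fix i assume "i \<in> {..<m}"
  then have "(\<Sum>j<m. U i * G i j * V j) = (\<Sum>j<m. if j = i then U i * G i i * V i else 0)"
    using diag by (intro sum.cong) auto
  also have "\<dots> = U i * G i i * V i" using \<open>i \<in> {..<m}\<close> by simp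
  finally show "(\<Sum>j<m. U i * G i j * V j) = G i i * U i * V i" by simp
qed simp

lemma bf_nonneg: "bform m G U U \<ge> 0"
  unfolding bf using pos by (intro sum_nonneg) (simp add: less_imp_le mult.assoc)

lemma bf_pos: assumes "i < m" "U i \<noteq> 0" shows "bform m G U U > 0"
proof -
  have "G i i * U i * U i > 0" using pos[OF assms(1)] assms(2) by (auto simp add: mult.assoc zero_less_mult_iff)
  moreover have "G i i * U i * U i \<le> (\<Sum>i<m. G i i * U i * U i)"
    using pos assms(1) by (intro member_le_sum) (auto simp: mult.assoc less_imp_le)
  ultimately show ?thesis unfolding bf by linarith
qed

definition K where "K A = real m * (\<Sum>i<m. \<Sum>j<m. G i i * (A i j)^2 / G j j)"

lemma bound: "bform m G (mvec m A U) (mvec m A U) \<le> K A * bform m G U U"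
proof -
  define S where "S = bform m G U U"
  have US: "U j ^ 2 \<le> S / G j j" if "j < m" for j
  proof -
    have "G j j * U j * U j \<le> (\<Sum>i<m. G i i * U i * U i)"
      using pos that by (intro member_le_sum) (auto simp: mult.assoc less_imp_le)
    then have "G j j * U j ^ 2 \<le> S" unfolding S_def bf by (simp add: power2_eq_square mult.assoc)
    then show ?thesis using pos[OF that] by (simp add: field_simps)
  qed
  have row: "(mvec m A U i)^2 \<le> S * (real m * (\<Sum>j<m. (A i j)^2 / G j j))" for i
  proof -
    have "(mvec m A U i)^2 = (\<Sum>j<m. 1 * (A i j * U j))^2" unfolding mvec_def by simp
    also have "\<dots> \<le> (\<Sum>j<m. 1^2) * (\<Sum>j<m. (A i j * U j)^2)" by (rule Cauchy_Schwarz_ineq_sum)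
    also have "\<dots> = real m * (\<Sum>j<m. (A i j)^2 * U j ^ 2)" by (simp add: power_mult_distrib)
    also have "\<dots> \<le> real m * (\<Sum>j<m. (A i j)^2 * (S / G j j))"
      using US by (intro mult_left_mono sum_mono) auto
    also have "\<dots> = S * (real m * (\<Sum>j<m. (A i j)^2 / G j j))"
      by (simp add: sum_distrib_left algebra_simps)
    finally show ?thesis .
  qed
  have "bform m G (mvec m A U) (mvec m A U) = (\<Sum>i<m. G i i * (mvec m A U i)^2)"
    unfolding bf by (simp add: power2_eq_square mult.assoc)
  also have "\<dots> \<le> (\<Sum>i<m. G i i * (S * (real m * (\<Sum>j<m. (A i j)^2 / G j j))))"
    using row pos by (intro sum_mono mult_left_mono) (auto simp: less_imp_le)
  also have "\<dots> = K A * S" unfolding K_def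
    by (simp add: sum_distrib_left sum_distrib_right algebra_simps)
  finally show ?thesis unfolding S_def .
qed

lemma CS: "(bform m G U V)^2 \<le> bform m G U U * bform m G V V"
proof -
  have "(bform m G U V)^2 = (\<Sum>i<m. (sqrt (G i i) * U i) * (sqrt (G i i) * V i))^2"
    unfolding bf using pos
    by (intro arg_cong[where f="\<lambda>x. x^2"] sum.cong) (auto simp: algebra_simps less_imp_le)
  also have "\<dots> \<le> (\<Sum>i<m. (sqrt (G i i) * U i)^2) * (\<Sum>i<m. (sqrt (G i i) * V i)^2)"
    by (rule Cauchy_Schwarz_ineq_sum)
  also have "\<dots> = bform m G U U * bform m G V V"
    unfolding bf using pos
    by (intro arg_cong2[where f="(*)"] sum.cong) (auto simp: power_mult_distrib less_imp_le power2_eq_square)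
  finally show ?thesis .
qed

definition SS where "SS A = {sqrt (bform m G (mvec m A u) (mvec m A u)) / sqrt (bform m G u u)
                          | u. \<exists>i<m. u i \<noteq> 0}"

lemma bdd: "bdd_above (SS A)"
proof (rule bdd_aboveI)
  fix x assume "x \<in> SS A"
  then obtain u i where x: "x = sqrt (bform m G (mvec m A u) (mvec m A u)) / sqrt (bform m G u u)"
    and i: "i < m" "u i \<noteq> 0" unfolding SS_def by auto
  have p: "bform m G u u > 0" using bf_pos[of i u, OF i] .
  have "sqrt (bform m G (mvec m A u) (mvec m A u)) \<le> sqrt (K A * bform m G u u)"
    using bound by simp
  also have "\<dots> = sqrt (K A) * sqrt (bform m G u u)"
    by (simp add: real_sqrt_mult)
  finally show "x \<le> sqrt (K A)" unfolding x using p by (simp add: divide_le_eq)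
qed

lemma opnorm_nonneg: assumes "m > 0" shows "opnorm_G m G A \<ge> 0"
proof -
  have mem: "sqrt (bform m G (mvec m A (\<lambda>_. 1)) (mvec m A (\<lambda>_. 1))) / sqrt (bform m G (\<lambda>_. 1) (\<lambda>_. 1)) \<in> SS A"
    unfolding SS_def using assms by (intro CollectI exI[where x="\<lambda>_. 1"]) auto
  have "0 \<le> sqrt (bform m G (mvec m A (\<lambda>_. 1)) (mvec m A (\<lambda>_. 1))) / sqrt (bform m G (\<lambda>_. 1) (\<lambda>_. 1))"
    using bf_nonneg by simp
  also have "\<dots> \<le> Sup (SS A)" by (rule cSup_upper[OF mem bdd])
  finally show ?thesis unfolding opnorm_G_def SS_def .
qed

lemma opnorm_bound: assumes "m > 0"
  shows "bform m G W (mvec m A W) \<le> opnorm_G m G A * bform m G W W"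
proof (cases "\<exists>i<m. W i \<noteq> 0")
  case False
  then have "bform m G W (mvec m A W) = 0" "bform m G W W = 0" unfolding bf by auto
  then show ?thesis by simp
next
  case True
  then obtain i where i: "i < m" "W i \<noteq> 0" by auto
  define s where "s = sqrt (bform m G W W)"
  define r where "r = sqrt (bform m G (mvec m A W) (mvec m A W))"
  have sp: "s > 0" unfolding s_def using bf_pos[of i W, OF i] by simp
  have mem: "r / s \<in> SS A" unfolding SS_def r_def s_def using True by auto
  have le: "r / s \<le> opnorm_G m G A" unfolding opnorm_G_def SS_def[symmetric]
    by (rule cSup_upper[OF mem bdd])
  have "bform m G W (mvec m A W) \<le> \<bar>bform m G W (mvec m A W)\<bar>" by simp
  also have "\<dots> = sqrt ((bform m G W (mvec m A W))^2)" by simp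
  also have "\<dots> \<le> sqrt (bform m G W W * bform m G (mvec m A W) (mvec m A W))"
    using CS[of W "mvec m A W"] real_sqrt_le_mono by blast
  also have "\<dots> = s * r" unfolding s_def r_def by (simp add: real_sqrt_mult)
  also have "\<dots> = s * s * (r / s)" using sp by simp
  also have "\<dots> \<le> s * s * opnorm_G m G A" using le sp by (intro mult_left_mono) auto
  also have "s * s = bform m G W W" unfolding s_def using bf_nonneg by simp
  finally show ?thesis by (simp add: mult.commute)
qed

end

theorem mainTheorem3:
  fixes L :: real and N :: nat and x :: "nat \<Rightarrow> real"
    and D H Q :: "nat \<Rightarrow> nat \<Rightarrow> real"
    and cbar a b c d :: "nat \<Rightarrow> real"
    and R0 RL :: real
    and I :: "real set"
    and W W' :: "real \<Rightarrow> nat \<Rightarrow> real"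
    and Eh :: "real \<Rightarrow> real"
  assumes L_pos: "L > 0" and N_ge: "N \<ge> 1"
    and grid: "\<And>i. i \<le> N \<Longrightarrow> x i = real i * L / real N"
    and H_diag: "\<And>i j. i \<le> N \<Longrightarrow> j \<le> N \<Longrightarrow> i \<noteq> j \<Longrightarrow> H i j = 0"
    and H_pos: "\<And>i. i \<le> N \<Longrightarrow> H i i > 0"
    and Q_def: "Q = mmul (N+1) H D"
    and SBP: "\<And>u v. bform (N+1) (\<lambda>i j. Q i j + Q j i) u v = u N * v N - u 0 * v 0"
    and cbar_pos: "\<And>i. i \<le> N \<Longrightarrow> cbar i > 0"
    and R0: "\<bar>R0\<bar> \<le> 1" and RL: "\<bar>RL\<bar> \<le> 1"
    and I_open: "open I"
    and W_deriv: "\<And>t i. t \<in> I \<Longrightarrow> i < 2*(N+1) \<Longrightarrow>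
                     ((\<lambda>s. W s i) has_real_derivative W' t i) (at t)"
    and W_eq: "\<And>t i. t \<in> I \<Longrightarrow> i < 2*(N+1) \<Longrightarrow>
      (let n = N+1; n2 = 2*(N+1);
           Lam = blk n (diagm (\<lambda>k. - cbar k)) (\<lambda>_ _. 0) (\<lambda>_ _. 0) (diagm cbar);
           D2 = kron_I2 n D; H2 = kron_I2 n H;
           Dc = mvec n D cbar;
           Mc = blk n (diagm (\<lambda>k. - Dc k)) (\<lambda>_ _. 0) (\<lambda>_ _. 0) (diagm Dc);
           Bt = blk n (diagm a) (diagm b) (diagm c) (diagm d);
           LamD = (\<lambda>p q. (mmul n2 Lam D2 p q + mmul n2 D2 Lam p q) / 2 - Mc p q / 2);
           H2inv = diagm (\<lambda>k. 1 / H2 k k);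
           alpha0 = - cbar 0; alphaL = - cbar N;
           e = (\<lambda>k::nat. \<lambda>p::nat. if p = k then (1::real) else 0)
       in W' t i + mvec n2 LamD (W t) i
          = mvec n2 Bt (W t) i
            + alpha0 * (W t (n + 0) - R0 * W t 0) * mvec n2 H2inv (e (n + 0)) i
            + alphaL * (W t N - RL * W t (n + N)) * mvec n2 H2inv (e N) i)"
    and Eh_def: "\<And>t. Eh t = bform (2*(N+1)) (kron_I2 (N+1) H) (W t) (W t)"
  shows "\<forall>t\<in>I. \<forall>E'. (Eh has_real_derivative E') (at t) \<longrightarrow>
           E' \<le> 2 * (opnorm_G (2*(N+1)) (kron_I2 (N+1) H)
                        (blk (N+1) (diagm a) (diagm b) (diagm c) (diagm d))
                     + opnorm_G (2*(N+1)) (kron_I2 (N+1) H)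
                        (blk (N+1) (diagm (\<lambda>k. - mvec (N+1) D cbar k)) (\<lambda>_ _. 0) (\<lambda>_ _. 0)
                                   (diagm (mvec (N+1) D cbar)))) * Eh t"
proof (intro ballI allI impI)
  fix t E' assume t: "t \<in> I" and dE: "(Eh has_real_derivative E') (at t)"
  define n where "n = N+1"
  define Lam where "Lam = blk n (diagm (\<lambda>k. - cbar k)) (\<lambda>_ _. 0) (\<lambda>_ _. 0) (diagm cbar)"
  define D2 where "D2 = kron_I2 n D"
  define H2 where "H2 = kron_I2 n H"
  define Dc where "Dc = mvec n D cbar"
  define Mc where "Mc = blk n (diagm (\<lambda>k. - Dc k)) (\<lambda>_ _. 0) (\<lambda>_ _. 0) (diagm Dc)"
  define Bt where "Bt = blk n (diagm a) (diagm b) (diagm c) (diagm d)"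
  define LamD where "LamD = (\<lambda>p q. (mmul (2*n) Lam D2 p q + mmul (2*n) D2 Lam p q) / 2 - Mc p q / 2)"
  define P where "P = mvec (2*n) (diagm (\<lambda>k. 1 / H2 k k)) (\<lambda>p. if p = n then 1 else 0)"
  define R where "R = mvec (2*n) (diagm (\<lambda>k. 1 / H2 k k)) (\<lambda>p. if p = N then 1 else 0)"
  define w1 where "w1 = W t"
  define w2 where "w2 = (\<lambda>j. W t (n+j))"
  have nN: "N < n" "0 < n" unfolding n_def by auto
  have Hd: "\<And>i j. i < n \<Longrightarrow> j < n \<Longrightarrow> i \<noteq> j \<Longrightarrow> H i j = 0"
    using H_diag unfolding n_def by auto
  have Hp: "\<And>i. i < n \<Longrightarrow> H i i > 0" using H_pos unfolding n_def by auto
  have weq: "W' t i = - mvec (2*n) LamD (W t) i + mvec (2*n) Bt (W t) i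
      + (- cbar 0) * (W t n - R0 * W t 0) * P i + (- cbar N) * (W t N - RL * W t (n+N)) * R i"
    if i: "i < 2*n" for i
  proof -
    have "W' t i + mvec (2*n) LamD (W t) i = mvec (2*n) Bt (W t) i
      + (- cbar 0) * (W t n - R0 * W t 0) * P i + (- cbar N) * (W t N - RL * W t (n+N)) * R i"
      using W_eq[OF t, of i] i unfolding Let_def n_def LamD_def Lam_def D2_def Mc_def Dc_def Bt_def P_def R_def H2_def
      by simp
    then show ?thesis by linarith
  qed
  interpret G: dg "2*n" H2
  proof
    show "\<And>i j. i < 2*n \<Longrightarrow> j < 2*n \<Longrightarrow> i \<noteq> j \<Longrightarrow> H2 i j = 0"
      unfolding H2_def by (rule kron_diag[OF Hd])
    show "\<And>i. i < 2*n \<Longrightarrow> H2 i i > 0"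
      using Hp unfolding H2_def kron_I2_def blk_def by auto
  qed
  have bH: "\<And>U V. bform (2*n) H2 U V = ipH n H U V" unfolding H2_def by (rule bform_H2[OF Hd])
  have H2kk: "H2 k k = H k k" "H2 (n+k) (n+k) = H k k" if "k < n" for k
    using that unfolding H2_def kron_I2_def blk_def by auto
  have Ehe: "Eh = (\<lambda>s. \<Sum>k<n. H k k * (W s k * W s k + W s (n+k) * W s (n+k)))"
    using Eh_def bH unfolding n_def[symmetric] H2_def[symmetric] ipH_def by auto
  have sq: "((\<lambda>s. W s i * W s i) has_real_derivative 2 * (W t i * W' t i)) (at t)"
    if "i < 2*n" for i
  proof -
    have i: "i < 2*(N+1)" using that n_def by simp
    from DERIV_mult[OF W_deriv[OF t i] W_deriv[OF t i]] show ?thesis by (simp add: algebra_simps)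
  qed
  have dd: "(Eh has_real_derivative (\<Sum>k<n. H k k * (2 * (W t k * W' t k)
          + 2 * (W t (n+k) * W' t (n+k))))) (at t)"
    unfolding Ehe
    by (intro DERIV_sum DERIV_cmult DERIV_add sq) auto
  have E'eq: "E' = 2 * ipH n H (W t) (W' t)"
    using DERIV_unique[OF dE dd] unfolding ipH_def sum_distrib_left
    by (simp add: algebra_simps)
  define LD where "LD = mvec (2*n) LamD (W t)"
  define BW where "BW = mvec (2*n) Bt (W t)"
  define MW where "MW = mvec (2*n) Mc (W t)"
  define s0 where "s0 = (- cbar 0) * (W t n - R0 * W t 0)"
  define sN where "sN = (- cbar N) * (W t N - RL * W t (n+N))"
  have ipW': "ipH n H (W t) (W' t) = - ipH n H (W t) LD + ipH n H (W t) BW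
       + s0 * ipH n H (W t) P + sN * ipH n H (W t) R"
  proof -
    have "ipH n H (W t) (W' t) = ipH n H (W t) (\<lambda>i. ((- LD i + BW i) + s0 * P i) + sN * R i)"
      by (rule ipH_cong) (simp add: weq LD_def BW_def s0_def sN_def)
    then show ?thesis by (simp only: ipH_add ipH_neg ipH_scale)
  qed
  have ipP: "ipH n H (W t) P = W t n"
  proof -
    have "ipH n H (W t) P = (\<Sum>k<n. if k = 0 then W t n else 0)"
      unfolding ipH_def
    proof (rule sum.cong)
      fix k assume k: "k \<in> {..<n}"
      have "P k = 0" using k unfolding P_def by (subst mvec_diagm) auto
      moreover have "P (n+k) = (if k = 0 then 1 / H k k else 0)"
        using k H2kk[of k] unfolding P_def by (subst mvec_diagm) auto
      ultimately show "H k k * (W t k * P k + W t (n + k) * P (n + k)) = (if k = 0 then W t n else 0)"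
        using Hp[of k] k by auto
    qed simp
    then show ?thesis using nN by simp
  qed
  have ipR: "ipH n H (W t) R = W t N"
  proof -
    have "ipH n H (W t) R = (\<Sum>k<n. if k = N then W t N else 0)"
      unfolding ipH_def
    proof (rule sum.cong)
      fix k assume k: "k \<in> {..<n}"
      have "R k = (if k = N then 1 / H k k else 0)" using k H2kk[of k] unfolding R_def by (subst mvec_diagm) auto
      moreover have "R (n+k) = 0"
        using k nN unfolding R_def by (subst mvec_diagm) auto
      ultimately show "H k k * (W t k * R k + W t (n + k) * R (n + k)) = (if k = N then W t N else 0)"
        using Hp[of k] k by auto
    qed simp
    then show ?thesis using nN by simp
  qed
  have Qe: "Q i j = H i i * D i j" if "i < n" for i j
  proof -
    have "Q i j = (\<Sum>k<n. if k = i then H i i * D i j else 0)"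
      unfolding Q_def mmul_def n_def[symmetric] using Hd that by (intro sum.cong) auto
    then show ?thesis using that by simp
  qed
  have Kp: "(\<Sum>k<n. H k k * (u k * mvec n D v k) + H k k * (v k * mvec n D u k)) = u N * v N - u 0 * v 0"
    for u v
  proof -
    have "bform n (\<lambda>i j. Q i j + Q j i) u v
       = (\<Sum>i<n. \<Sum>j<n. H i i * (u i * (D i j * v j)) + H j j * (v j * (D j i * u i)))"
      unfolding bform_def by (intro sum.cong refl) (simp add: Qe algebra_simps)
    also have "\<dots> = (\<Sum>i<n. \<Sum>j<n. H i i * (u i * (D i j * v j))) + (\<Sum>i<n. \<Sum>j<n. H j j * (v j * (D j i * u i)))"
      by (simp add: sum.distrib)
    also have "(\<Sum>i<n. \<Sum>j<n. H j j * (v j * (D j i * u i))) = (\<Sum>j<n. \<Sum>i<n. H j j * (v j * (D j i * u i)))"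
      by (rule sum.swap)
    also have "(\<Sum>i<n. \<Sum>j<n. H i i * (u i * (D i j * v j))) + (\<Sum>j<n. \<Sum>i<n. H j j * (v j * (D j i * u i)))
        = (\<Sum>k<n. H k k * (u k * mvec n D v k)) + (\<Sum>k<n. H k k * (v k * mvec n D u k))"
      unfolding mvec_def by (simp add: sum_distrib_left)
    finally show ?thesis using SBP[of u v] unfolding n_def[symmetric] by (simp add: sum.distrib)
  qed
  define X1 where "X1 = mvec (2*n) (mmul (2*n) Lam D2) (W t)"
  define X2 where "X2 = mvec (2*n) (mmul (2*n) D2 Lam) (W t)"
  have LDe: "ipH n H (W t) LD = (ipH n H (W t) X1 + ipH n H (W t) X2) / 2 - ipH n H (W t) MW / 2"
  proof -
    have "LD = (\<lambda>i. (X1 i + X2 i) / 2 - MW i / 2)"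
      unfolding LD_def X1_def X2_def MW_def LamD_def by (rule ext) (rule mvec_lin)
    then show ?thesis by (simp only: ipH_diff ipH_div ipH_add)
  qed
  define DW where "DW = mvec (2*n) D2 (W t)"
  define LW where "LW = mvec (2*n) Lam (W t)"
  have DW1: "DW k = mvec n D (W t) k" and DW2: "DW (n+k) = mvec n D (\<lambda>j. W t (n+j)) k"
    and LW1: "LW k = - cbar k * W t k" and LW2: "LW (n+k) = cbar k * W t (n+k)"
    if "k < n" for k
    using that unfolding DW_def LW_def D2_def kron_I2_def Lam_def
    by (simp_all add: mvec_blk mvec_zero mvec_diagm)
  have X1a: "X1 k = - cbar k * mvec n D (W t) k" and X1b: "X1 (n+k) = cbar k * mvec n D (\<lambda>j. W t (n+j)) k"
    if "k < n" for k
    using that DW1[OF that] DW2[OF that] unfolding X1_def mvec_mmul DW_def[symmetric] Lam_def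
    by (simp_all add: mvec_blk mvec_zero mvec_diagm)
  have X2a: "X2 k = mvec n D (\<lambda>j. - cbar j * W t j) k"
    and X2b: "X2 (n+k) = mvec n D (\<lambda>j. cbar j * W t (n+j)) k"
    if "k < n" for k
  proof -
    have "X2 k = mvec n D LW k" using that unfolding X2_def mvec_mmul LW_def[symmetric] D2_def kron_I2_def
      by (simp add: mvec_blk mvec_zero)
    also have "\<dots> = mvec n D (\<lambda>j. - cbar j * W t j) k" by (rule mvec_cong) (simp add: LW1)
    finally show "X2 k = mvec n D (\<lambda>j. - cbar j * W t j) k" .
    have "X2 (n+k) = mvec n D (\<lambda>j. LW (n+j)) k" using that unfolding X2_def mvec_mmul LW_def[symmetric] D2_def kron_I2_def
      by (simp add: mvec_blk mvec_zero)
    also have "\<dots> = mvec n D (\<lambda>j. cbar j * W t (n+j)) k" by (rule mvec_cong) (simp add: LW2)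
    finally show "X2 (n+k) = mvec n D (\<lambda>j. cbar j * W t (n+j)) k" .
  qed
  have X12: "ipH n H (W t) X1 + ipH n H (W t) X2 =
     (- cbar N * W t N * W t N + cbar 0 * W t 0 * W t 0)
     + (cbar N * W t (n+N) * W t (n+N) - cbar 0 * W t n * W t n)"
  proof -
    have "ipH n H (W t) X1 + ipH n H (W t) X2 =
      (\<Sum>k<n. H k k * ((\<lambda>j. - cbar j * W t j) k * mvec n D (W t) k) + H k k * (W t k * mvec n D (\<lambda>j. - cbar j * W t j) k))
      + (\<Sum>k<n. H k k * ((\<lambda>j. cbar j * W t (n+j)) k * mvec n D (\<lambda>j. W t (n+j)) k) + H k k * ((\<lambda>j. W t (n+j)) k * mvec n D (\<lambda>j. cbar j * W t (n+j)) k))"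
      unfolding ipH_def sum.distrib[symmetric]
      by (intro sum.cong refl) (simp add: X1a X1b X2a X2b, simp add: algebra_simps)
    also have "\<dots> = (- cbar N * W t N * W t N + cbar 0 * W t 0 * W t 0)
     + (cbar N * W t (n+N) * W t (n+N) - cbar 0 * W t n * W t n)"
      unfolding Kp by simp
    finally show ?thesis .
  qed
  have n2: "0 < 2*n" using nN by simp
  have Bb: "ipH n H (W t) BW \<le> opnorm_G (2*n) H2 Bt * Eh t"
    using G.opnorm_bound[OF n2, of "W t" Bt] unfolding bH BW_def Eh_def n_def[symmetric] H2_def[symmetric] .
  have Mb: "ipH n H (W t) MW \<le> opnorm_G (2*n) H2 Mc * Eh t"
    using G.opnorm_bound[OF n2, of "W t" Mc] unfolding bH MW_def Eh_def n_def[symmetric] H2_def[symmetric] .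
  have Mn: "opnorm_G (2*n) H2 Mc \<ge> 0" by (rule G.opnorm_nonneg[OF n2])
  have En: "Eh t \<ge> 0" unfolding Eh_def n_def[symmetric] H2_def[symmetric] by (rule G.bf_nonneg)
  have b0: "0 \<le> cbar 0 * (W t 0 * W t 0 + W t n * W t n - 2 * R0 * W t 0 * W t n)"
    using cbar_pos[of 0] bnd[OF R0] by simp
  have bN: "0 \<le> cbar N * (W t N * W t N + W t (n+N) * W t (n+N) - 2 * RL * W t N * W t (n+N))"
    using cbar_pos[of N] bnd[OF RL] by simp
  have E'2: "E' = - (ipH n H (W t) X1 + ipH n H (W t) X2) + ipH n H (W t) MW + 2 * ipH n H (W t) BW
      + 2 * s0 * W t n + 2 * sN * W t N"
    unfolding E'eq ipW' LDe ipP ipR by (simp add: algebra_simps)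
  have final: "E' \<le> 2 * (opnorm_G (2*n) H2 Bt + opnorm_G (2*n) H2 Mc) * Eh t"
  proof -
    have "E' = - cbar 0 * (W t 0 * W t 0 + W t n * W t n - 2 * R0 * W t 0 * W t n)
       - cbar N * (W t N * W t N + W t (n+N) * W t (n+N) - 2 * RL * W t N * W t (n+N))
       + ipH n H (W t) MW + 2 * ipH n H (W t) BW"
      unfolding E'2 X12 s0_def sN_def by (simp add: algebra_simps)
    also have "\<dots> \<le> ipH n H (W t) MW + 2 * ipH n H (W t) BW" using b0 bN by linarith
    also have "\<dots> \<le> opnorm_G (2*n) H2 Mc * Eh t + 2 * (opnorm_G (2*n) H2 Bt * Eh t)"
      using Mb Bb by linarith
    also have "\<dots> \<le> 2 * (opnorm_G (2*n) H2 Bt + opnorm_G (2*n) H2 Mc) * Eh t"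
      using mult_nonneg_nonneg[OF Mn En] by (simp add: algebra_simps)
    finally show ?thesis .
  qed
  show "E' \<le> 2 * (opnorm_G (2*(N+1)) (kron_I2 (N+1) H)
                        (blk (N+1) (diagm a) (diagm b) (diagm c) (diagm d))
                     + opnorm_G (2*(N+1)) (kron_I2 (N+1) H)
                        (blk (N+1) (diagm (\<lambda>k. - mvec (N+1) D cbar k)) (\<lambda>_ _. 0) (\<lambda>_ _. 0)
                                   (diagm (mvec (N+1) D cbar)))) * Eh t"
    using final unfolding n_def H2_def Bt_def Mc_def Dc_def .
qed

end
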